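(* Consider any sequences evolved by Algorithm 1 and let $d_0:=\|x^*-x^0\|$. Then: (a) for all $k\ge1$, $h(y^k)-h(x^* )\le\frac{d_0^2}{2A_k}$, $\|x^*-y^k\|^2\le\frac{d_0^2}{\mu A_k}$, and $\|x^*-x^k\|^2\le\frac{d_0^2}{1+\mu A_k}$; (b) for all $k\ge1$, $v^{k+1}\in\partial_{\varepsilon_{k+1}}f(y^{k+1})+\partial g(y^{k+1})$, $\|v^{k+1}\|^2\le\frac{6\big(1+\sigma\sqrt{1+\mu\lambda_{k+1}}\big)^2}{\lambda_{k+1}^2}\cdot\frac{d_0^2}{\mu A_k}$, and $\varepsilon_{k+1}\le\frac{3\sigma^2}{\lambda_{k+1}}\cdot\frac{d_0^2}{\mu A_k}$.
   Context: Setting: $\mathcal H$ is a finite-dimensional real inner product space with inner product $\langle\cdot,\cdot\rangle$ and norm $\|\cdot\|$. $f,g:\mathcal H\to(-\infty,\infty]$ are proper, closed, convex functions, $h:=f+g$ has nonempty domain, and $g$ is $\mu$-strongly convex for some $\mu>0$, i.e. $g(tx+(1-t)y)\le tg(x)+(1-t)g(y)-\frac{\mu}{2}t(1-t)\|x-y\|^2$ for all $x,y\in\mathcal H$, $t\in[0,1]$. $x^*$ denotes the unique minimizer of $h$. For $\varepsilon\ge 0$, $\partial_\varepsilon f(y):=\{u\in\mathcal H: f(w)\ge f(y)+\langle u,w-y\rangle-\varepsilon\ \forall w\in\mathcal H\}$, and $\partial g:=\partial_0 g$. Algorithm 1: Choose $x^0,y^0\in\mathcal H$ and $\sigma\in[0,1]$,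 and set $A_0=0$. For $k=0,1,2,\dots$: choose $\lambda_{k+1}>0$, set $a_{k+1}=\frac{(1+2\mu A_k)\lambda_{k+1}+\sqrt{(1+2\mu A_k)^2\lambda_{k+1}^2+4(1+\mu A_k)A_k\lambda_{k+1}}}{2}$ and $\tilde x^k=\frac{a_{k+1}-\mu A_k\lambda_{k+1}}{A_k+a_{k+1}}x^k+\frac{A_k+\mu A_k\lambda_{k+1}}{A_k+a_{k+1}}y^k$; compute $(y^{k+1},v^{k+1},\varepsilon_{k+1})\in\mathcal H\times\mathcal H\times[0,\infty)$ such that $v^{k+1}\in\partial_{\varepsilon_{k+1}}f(y^{k+1})+\partial g(y^{k+1})$ and $\frac{\|\lambda_{k+1}v^{k+1}+y^{k+1}-\tilde x^k\|^2}{1+\lambda_{k+1}\mu}+2\lambda_{k+1}\varepsilon_{k+1}\le\sigma^2\|y^{k+1}-\tilde x^k\|^2$; then set $A_{k+1}=A_k+a_{k+1}$ and $x^{k+1}=\frac{1+\mu A_k}{1+\mu A_{k+1}}x^k+\frac{\mu a_{k+1}}{1+\mu A_{k+1}}y^{k+1}-\frac{a_{k+1}}{1+\mu A_{k+1}}v^{k+1}$. "Sequences evolved by Algorithm 1" means any sequences satisfying all these relations for every $k\ge 0$. *)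

theory Defs
  imports "HOL-Analysis.Analysis"
begin

definition proper_fun :: "('a \<Rightarrow> ereal) \<Rightarrow> bool" where
  "proper_fun f \<longleftrightarrow> (\<forall>x. f x \<noteq> -\<infinity>) \<and> (\<exists>x. f x \<noteq> \<infinity>)"

definition closed_fun :: "('a::topological_space \<Rightarrow> ereal) \<Rightarrow> bool" where
  "closed_fun f \<longleftrightarrow> closed {(x, t::real). f x \<le> ereal t}"

definition convex_fun :: "('a::real_vector \<Rightarrow> ereal) \<Rightarrow> bool" where
  "convex_fun f \<longleftrightarrow> (\<forall>x y t. 0 \<le> t \<and> t \<le> 1 \<longrightarrow>
      f (t *\<^sub>R x + (1 - t) *\<^sub>R y) \<le> ereal t * f x + ereal (1 - t) * f y)"

definition strongly_convex_fun :: "real \<Rightarrow> ('a::real_normed_vector \<Rightarrow> ereal) \<Rightarrow> bool" where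
  "strongly_convex_fun \<mu> g \<longleftrightarrow> (\<forall>x y t. 0 \<le> t \<and> t \<le> 1 \<longrightarrow>
      g (t *\<^sub>R x + (1 - t) *\<^sub>R y) \<le> ereal t * g x + ereal (1 - t) * g y
        - ereal (\<mu> / 2 * t * (1 - t) * (norm (x - y))\<^sup>2))"

text \<open>epsilon-subdifferential; the ordinary subdifferential is the case epsilon = 0.\<close>
definition eps_subdiff :: "('a::real_inner \<Rightarrow> ereal) \<Rightarrow> real \<Rightarrow> 'a \<Rightarrow> 'a set" where
  "eps_subdiff f \<epsilon> y = {u. \<forall>w. f w \<ge> f y + ereal (inner u (w - y) - \<epsilon>)}"

end

theory Submission
  imports Defs
begin

lemma nsq_add: "(norm (p + q))\<^sup>2 = (norm p)\<^sup>2 + 2 * inner p q + (norm q)\<^sup>2"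
  for p q :: "'a::real_inner"
  by (simp add: power2_norm_eq_inner inner_add_left inner_add_right inner_commute)

lemma nsq_diff: "(norm (p - q))\<^sup>2 = (norm p)\<^sup>2 - 2 * inner p q + (norm q)\<^sup>2"
  for p q :: "'a::real_inner"
  by (simp add: power2_norm_eq_inner inner_diff_left inner_diff_right inner_commute)

lemma nsq_scale: "(norm (c *\<^sub>R p))\<^sup>2 = c\<^sup>2 * (norm p)\<^sup>2"
  for p :: "'a::real_inner"
  by (simp add: power_mult_distrib)

lemma L1:
  fixes v y' xt w :: "'a::real_inner"
  assumes lam: "lam > 0" and mu: "mu \<ge> 0" and sg: "0 \<le> s" "s \<le> 1"
    and err: "(norm (lam *\<^sub>R v + y' - xt))\<^sup>2 / (1 + lam * mu) + 2 * lam * e \<le> s\<^sup>2 * (norm (y' - xt))\<^sup>2"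
  shows "0 \<le> inner v (w - y') - e + mu / 2 * (norm (w - y'))\<^sup>2 + (norm (w - xt))\<^sup>2 / (2 * lam)"
proof -
  define r where "r = lam *\<^sub>R v + y' - xt"
  define z where "z = w - y'"
  define sv where "sv = y' - xt"
  have lv: "lam *\<^sub>R v = r - sv" unfolding r_def sv_def by simp
  have wx: "w - xt = z + sv" unfolding z_def sv_def by simp
  have i1: "2 * lam * inner v z = 2 * inner r z - 2 * inner sv z"
  proof -
    have "lam * inner v z = inner (lam *\<^sub>R v) z" by simp
    also have "\<dots> = inner r z - inner sv z" by (simp add: lv inner_diff_left)
    finally show ?thesis by simp
  qed
  have e1: "(norm (w - xt))\<^sup>2 = (norm z)\<^sup>2 + 2 * inner z sv + (norm sv)\<^sup>2"
    by (simp add: wx nsq_add)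
  have q0: "0 \<le> (norm ((1 + lam*mu) *\<^sub>R z + r))\<^sup>2" by simp
  hence q1: "0 \<le> (1 + lam*mu)\<^sup>2 * (norm z)\<^sup>2 + 2 * (1 + lam*mu) * inner z r + (norm r)\<^sup>2"
    unfolding nsq_add nsq_scale inner_scaleR_left by (simp add: algebra_simps)
  have pos: "1 + lam * mu > 0" using lam mu by (simp add: add_pos_nonneg)
  have q2: "- ((norm r)\<^sup>2 / (1 + lam*mu)) \<le> (1 + lam*mu) * (norm z)\<^sup>2 + 2 * inner z r"
  proof -
    have "0 \<le> ((1 + lam*mu)\<^sup>2 * (norm z)\<^sup>2 + 2 * (1 + lam*mu) * inner z r + (norm r)\<^sup>2) / (1 + lam*mu)"
      using q1 pos by simp
    also have "\<dots> = (1 + lam*mu) * (norm z)\<^sup>2 + 2 * inner z r + (norm r)\<^sup>2 / (1 + lam*mu)"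
      using pos by (simp add: field_simps power2_eq_square)
    finally show ?thesis by linarith
  qed
  have err': "(norm r)\<^sup>2 / (1 + lam * mu) + 2 * lam * e \<le> (norm sv)\<^sup>2"
  proof -
    have "s\<^sup>2 \<le> 1" using sg by (simp add: power_le_one)
    hence "s\<^sup>2 * (norm sv)\<^sup>2 \<le> (norm sv)\<^sup>2" by (simp add: mult_left_le_one_le)
    thus ?thesis using err unfolding r_def sv_def by linarith
  qed
  have key: "0 \<le> 2 * lam * (inner v z - e + mu / 2 * (norm z)\<^sup>2 + (norm (w - xt))\<^sup>2 / (2 * lam))"
  proof -
    have "2 * lam * (inner v z - e + mu / 2 * (norm z)\<^sup>2 + (norm (w - xt))\<^sup>2 / (2 * lam))
       = 2 * lam * inner v z - 2 * lam * e + lam * mu * (norm z)\<^sup>2 + (norm (w - xt))\<^sup>2"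
      using lam by (simp add: field_simps)
    also have "\<dots> = 2 * inner r z + (1 + lam*mu) * (norm z)\<^sup>2 + (norm sv)\<^sup>2 - 2 * lam * e"
      unfolding i1 e1 by (simp add: inner_commute algebra_simps)
    finally show ?thesis using q2 err' by (simp add: inner_commute)
  qed
  have "0 \<le> inner v z - e + mu / 2 * (norm z)\<^sup>2 + (norm (w - xt))\<^sup>2 / (2 * lam)"
    using key lam by (simp add: zero_le_mult_iff)
  thus ?thesis unfolding z_def .
qed

lemma L2:
  fixes y u y' v :: "'a::real_inner"
  assumes A: "A \<ge> 0" and a: "a \<ge> 0" and B: "A + a > 0"
  shows "A * (inner v (y - y') - e + mu / 2 * (norm (y - y'))\<^sup>2)
       + a * (inner v (u - y') - e + mu / 2 * (norm (u - y'))\<^sup>2)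
     = (A + a) * (inner v (((A/(A+a)) *\<^sub>R y + (a/(A+a)) *\<^sub>R u) - y') - e
          + mu / 2 * (norm (((A/(A+a)) *\<^sub>R y + (a/(A+a)) *\<^sub>R u) - y'))\<^sup>2)
       + mu * A * a / (2 * (A + a)) * (norm (y - u))\<^sup>2"
proof -
  define Y where "Y = y - y'"
  define U where "U = u - y'"
  have w: "((A/(A+a)) *\<^sub>R y + (a/(A+a)) *\<^sub>R u) - y' = (A/(A+a)) *\<^sub>R Y + (a/(A+a)) *\<^sub>R U"
  proof -
    have "(A/(A+a)) + (a/(A+a)) = 1" using B by (simp add: add_divide_distrib[symmetric])
    hence "y' = (A/(A+a)) *\<^sub>R y' + (a/(A+a)) *\<^sub>R y'" by (metis scaleR_add_left scaleR_one)
    hence "((A/(A+a)) *\<^sub>R y + (a/(A+a)) *\<^sub>R u) - y' = (A/(A+a)) *\<^sub>R y + (a/(A+a)) *\<^sub>R u - ((A/(A+a)) *\<^sub>R y' + (a/(A+a)) *\<^sub>R y')" by simp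
    thus ?thesis unfolding Y_def U_def by (simp add: algebra_simps)
  qed
  have yu: "y - u = Y - U" unfolding Y_def U_def by simp
  obtain t B where AB: "A = t * B" "a = (1 - t) * B" "B > 0"
    using B by (intro that[of "A/(A+a)" "A+a"]) (auto simp: field_simps)
  have AaB: "A + a = B" using AB by (simp add: algebra_simps)
  have t1: "A/(A+a) = t" and t2: "a/(A+a) = 1 - t" unfolding AaB using AB by auto
  have core: "t*B*(inner v Y - e + mu/2 * (norm Y)\<^sup>2) + (1-t)*B*(inner v U - e + mu/2*(norm U)\<^sup>2)
     = B*(inner v (t *\<^sub>R Y + (1-t) *\<^sub>R U) - e + mu/2*(norm (t *\<^sub>R Y + (1-t) *\<^sub>R U))\<^sup>2)
       + mu*(t*B)*((1-t)*B)/(2*B) * (norm (Y-U))\<^sup>2"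
    using AB(3)
    apply (simp only: power2_norm_eq_inner)
    apply (simp add: inner_add_left inner_add_right inner_diff_left inner_diff_right inner_scaleR_left
        inner_scaleR_right inner_commute)
    apply (simp add: field_simps)
    done
  have w': "t *\<^sub>R y + (1-t) *\<^sub>R u - y' = t *\<^sub>R Y + (1-t) *\<^sub>R U"
    unfolding Y_def U_def by (simp add: algebra_simps)
  show ?thesis
    unfolding t1 t2 unfolding w' yu Y_def[symmetric] U_def[symmetric]
    using core AB(1,2) AaB by simp
qed

lemma L3:
  fixes u x x' y' v :: "'a::real_inner"
  assumes c': "c + mu * a \<noteq> 0"
    and x': "x' = (c / (c + mu*a)) *\<^sub>R x + (mu * a / (c + mu*a)) *\<^sub>R y' - (a / (c + mu*a)) *\<^sub>R v"
  shows "a * (inner v (u - y') - e + mu / 2 * (norm (u - y'))\<^sup>2) + c / 2 * (norm (u - x))\<^sup>2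
     = a * (inner v (x' - y') - e + mu / 2 * (norm (x' - y'))\<^sup>2) + c / 2 * (norm (x' - x))\<^sup>2
       + (c + mu * a) / 2 * (norm (u - x'))\<^sup>2"
proof -
  define D where "D = u - x'"
  have cx: "(c + mu*a) *\<^sub>R x' = c *\<^sub>R x + (mu*a) *\<^sub>R y' - a *\<^sub>R v"
    using c' unfolding x' by (simp add: scaleR_add_right scaleR_diff_right)
  have key: "a *\<^sub>R v + (a*mu) *\<^sub>R (x' - y') + c *\<^sub>R (x' - x) = 0"
  proof -
    have "a *\<^sub>R v + (a*mu) *\<^sub>R (x' - y') + c *\<^sub>R (x' - x)
        = (c + mu*a) *\<^sub>R x' - (c *\<^sub>R x + (mu*a) *\<^sub>R y' - a *\<^sub>R v)"
      by (simp add: algebra_simps)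
    thus ?thesis using cx by simp
  qed
  hence key2: "a * inner v D + a*mu * inner (x' - y') D + c * inner (x' - x) D = 0"
    by (metis inner_add_left inner_scaleR_left inner_zero_left)
  have u1: "u - y' = D + (x' - y')" and u2: "u - x = D + (x' - x)" and u3: "u - x' = D"
    unfolding D_def by simp_all
  have "a * (inner v (u - y') - e + mu / 2 * (norm (u - y'))\<^sup>2) + c / 2 * (norm (u - x))\<^sup>2
     - (a * (inner v (x' - y') - e + mu / 2 * (norm (x' - y'))\<^sup>2) + c / 2 * (norm (x' - x))\<^sup>2
       + (c + mu * a) / 2 * (norm (u - x'))\<^sup>2)
     = a * inner v D + a*mu * inner (x' - y') D + c * inner (x' - x) D"
    unfolding u1 u2 u3 nsq_add inner_add_right by (simp add: inner_commute algebra_simps)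
  thus ?thesis using key2 by simp
qed

lemma L4:
  fixes p q :: "'a::real_inner"
  assumes h: "a\<^sup>2 = lam * ((1 + mu*A) * (A + a) + mu * A * a)"
  shows "mu*A*a*lam * (norm (q - p))\<^sup>2 + (1 + mu*A)*lam*(A+a) * (norm p)\<^sup>2
        - (norm (a *\<^sub>R p - (mu*A*lam) *\<^sub>R q))\<^sup>2 = mu*A*lam*(a - mu*A*lam) * (norm q)\<^sup>2"
proof -
  have "mu*A*a*lam * (norm (q - p))\<^sup>2 + (1 + mu*A)*lam*(A+a) * (norm p)\<^sup>2
        - (norm (a *\<^sub>R p - (mu*A*lam) *\<^sub>R q))\<^sup>2 - mu*A*lam*(a - mu*A*lam) * (norm q)\<^sup>2
     = (lam * ((1 + mu*A) * (A + a) + mu * A * a) - a\<^sup>2) * (norm p)\<^sup>2"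
    apply (simp only: power2_norm_eq_inner)
    apply (simp add: inner_add_left inner_add_right inner_diff_left inner_diff_right inner_scaleR_left
        inner_scaleR_right inner_commute)
    apply (simp add: algebra_simps power2_eq_square)
    done
  thus ?thesis using h by simp
qed

lemma step:
  fixes x y x' y' v xt xs :: "'a::real_inner"
  assumes mu: "mu > 0" and lam: "lam > 0" and A: "A \<ge> 0" and a: "a > 0"
    and quad: "a\<^sup>2 = lam * ((1 + 2*mu*A) * a + (1 + mu*A) * A)"
    and age: "mu * A * lam \<le> a"
    and sg: "0 \<le> s" "s \<le> 1"
    and err: "(norm (lam *\<^sub>R v + y' - xt))\<^sup>2 / (1 + lam * mu) + 2 * lam * e \<le> s\<^sup>2 * (norm (y' - xt))\<^sup>2"
    and xt: "xt = ((a - mu*A*lam)/(A+a)) *\<^sub>R x + ((A + mu*A*lam)/(A+a)) *\<^sub>R y"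
    and x': "x' = ((1 + mu*A)/(1 + mu*(A+a))) *\<^sub>R x + (mu*a/(1 + mu*(A+a))) *\<^sub>R y' - (a/(1 + mu*(A+a))) *\<^sub>R v"
    and hY: "A * (H' + (inner v (y - y') - e + mu / 2 * (norm (y - y'))\<^sup>2)) \<le> A * Hy"
    and hS: "H' + (inner v (xs - y') - e + mu / 2 * (norm (xs - y'))\<^sup>2) \<le> hs"
  shows "(A+a) * (H' - hs) + (1 + mu*(A+a)) / 2 * (norm (xs - x'))\<^sup>2
      \<le> A * (Hy - hs) + (1 + mu*A) / 2 * (norm (xs - x))\<^sup>2"
proof -
  define G where "G w = inner v (w - y') - e + mu / 2 * (norm (w - y'))\<^sup>2" for w
  define c where "c = 1 + mu*A"
  define B where "B = A + a"
  have Bpos: "B > 0" unfolding B_def using A a by simp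
  have cpos: "c > 0" unfolding c_def using A mu by (simp add: add_pos_nonneg)
  have cc: "1 + mu*(A+a) = c + mu*a" unfolding c_def by (simp add: algebra_simps)
  have x'': "x' = (c/(c + mu*a)) *\<^sub>R x + (mu*a/(c + mu*a)) *\<^sub>R y' - (a/(c + mu*a)) *\<^sub>R v"
    using x' unfolding cc c_def .
  have c'pos: "c + mu*a > 0" using cpos mu a by (simp add: add_pos_pos)
  have E1: "a * G xs + c/2 * (norm (xs - x))\<^sup>2 = a * G x' + c/2 * (norm (x' - x))\<^sup>2 + (c + mu*a)/2 * (norm (xs - x'))\<^sup>2"
    unfolding G_def by (rule L3[OF _ x'']) (use c'pos in simp)
  define W where "W = (A/(A+a)) *\<^sub>R y + (a/(A+a)) *\<^sub>R x'"
  have E2: "A * G y + a * G x' = B * G W + mu*A*a/(2*B) * (norm (y - x'))\<^sup>2"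
    unfolding G_def W_def B_def by (rule L2) (use A a in auto)
  have E3: "0 \<le> G W + (norm (W - xt))\<^sup>2 / (2*lam)"
    unfolding G_def by (rule L1[OF lam _ sg err]) (use mu in simp)
  have quad': "a\<^sup>2 = lam * ((1 + mu*A) * (A + a) + mu * A * a)"
    using quad by (simp add: algebra_simps power2_eq_square)
  have E4: "mu*A*a*lam * (norm ((y - x) - (x' - x)))\<^sup>2 + c*lam*B * (norm (x' - x))\<^sup>2
        - (norm (a *\<^sub>R (x' - x) - (mu*A*lam) *\<^sub>R (y - x)))\<^sup>2 = mu*A*lam*(a - mu*A*lam) * (norm (y - x))\<^sup>2"
    unfolding c_def B_def by (rule L4[OF quad'])
  have E4': "0 \<le> mu*A*lam*(a - mu*A*lam) * (norm (y - x))\<^sup>2"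
    using mu A lam age by simp
  have vecW: "a *\<^sub>R (x' - x) - (mu*A*lam) *\<^sub>R (y - x) = B *\<^sub>R (W - xt)"
  proof -
    have "B *\<^sub>R W = A *\<^sub>R y + a *\<^sub>R x'" unfolding W_def B_def using Bpos unfolding B_def
      by (simp add: scaleR_add_right)
    moreover have "B *\<^sub>R xt = (a - mu*A*lam) *\<^sub>R x + (A + mu*A*lam) *\<^sub>R y"
      unfolding xt B_def using Bpos unfolding B_def by (simp add: scaleR_add_right)
    ultimately have "B *\<^sub>R (W - xt) = A *\<^sub>R y + a *\<^sub>R x' - ((a - mu*A*lam) *\<^sub>R x + (A + mu*A*lam) *\<^sub>R y)"
      by (simp add: scaleR_diff_right)
    thus ?thesis by (simp add: algebra_simps)
  qed
  have yx: "(y - x) - (x' - x) = y - x'" by simp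
  have E5: "B\<^sup>2 * (norm (W - xt))\<^sup>2 \<le> mu*A*a*lam * (norm (y - x'))\<^sup>2 + c*lam*B * (norm (x' - x))\<^sup>2"
    using E4 E4' unfolding vecW yx nsq_scale by linarith
  have E6: "B * ((norm (W - xt))\<^sup>2 / (2*lam)) \<le> mu*A*a/(2*B) * (norm (y - x'))\<^sup>2 + c/2 * (norm (x' - x))\<^sup>2"
  proof -
    have "B * ((norm (W - xt))\<^sup>2 / (2*lam)) = (B\<^sup>2 * (norm (W - xt))\<^sup>2) / (2*lam*B)"
      using Bpos lam by (simp add: field_simps power2_eq_square)
    also have "\<dots> \<le> (mu*A*a*lam * (norm (y - x'))\<^sup>2 + c*lam*B * (norm (x' - x))\<^sup>2) / (2*lam*B)"
      using E5 Bpos lam by (simp add: divide_right_mono)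
    also have "\<dots> = mu*A*a/(2*B) * (norm (y - x'))\<^sup>2 + c/2 * (norm (x' - x))\<^sup>2"
      using Bpos lam by (simp add: field_simps)
    finally show ?thesis .
  qed
  have E7: "0 \<le> A * G y + a * G x' + c/2 * (norm (x' - x))\<^sup>2"
  proof -
    have "0 \<le> B * (G W + (norm (W - xt))\<^sup>2 / (2*lam))" using E3 Bpos by simp
    thus ?thesis using E2 E6 by (simp add: algebra_simps)
  qed
  have hY': "A * H' + A * G y \<le> A * Hy" using hY unfolding G_def by (simp add: algebra_simps)
  have hS': "a * H' + a * G xs \<le> a * hs"
    using mult_left_mono[OF hS[folded G_def] less_imp_le[OF a]] by (simp add: algebra_simps)
  have fin: "(A+a) * (H' - hs) + (c + mu*a) / 2 * (norm (xs - x'))\<^sup>2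
      \<le> A * (Hy - hs) + c / 2 * (norm (xs - x))\<^sup>2"
  proof -
    have e: "(c + mu*a) / 2 * (norm (xs - x'))\<^sup>2 = a * G xs + c/2 * (norm (xs - x))\<^sup>2 - a * G x' - c/2 * (norm (x' - x))\<^sup>2"
      using E1 by linarith
    have "(A+a) * (H' - hs) = A * H' + a * H' - A * hs - a * hs" by (simp add: algebra_simps)
    thus ?thesis unfolding e using E7 hY' hS' by (simp add: algebra_simps)
  qed
  show ?thesis using fin unfolding cc c_def .
qed

lemma lim_lemma:
  fixes K D gu mu :: real
  assumes mu: "mu > 0" and D: "D \<ge> 0"
    and h: "\<And>t. 0 < t \<Longrightarrow> t \<le> 1 \<Longrightarrow> K + mu/2*(1-t)*D \<le> gu"
  shows "K + mu/2*D \<le> gu"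
proof (rule ccontr)
  assume "\<not> ?thesis"
  hence d: "K + mu/2*D - gu > 0" by simp
  define t where "t = min 1 ((K + mu/2*D - gu) / (mu/2*D + 1))"
  have den: "mu/2*D + 1 > 0" using mu D by (simp add: add_nonneg_pos)
  have t0: "0 < t" unfolding t_def using d den by (simp add: divide_pos_pos)
  have t1: "t \<le> 1" unfolding t_def by simp
  have "t * (mu/2*D) < K + mu/2*D - gu"
  proof -
    have md: "mu/2*D \<ge> 0" using mu D by simp
    have "t * (mu/2*D) \<le> ((K + mu/2*D - gu) / (mu/2*D + 1)) * (mu/2*D)"
      using md by (intro mult_right_mono) (auto simp: t_def)
    also have "\<dots> < K + mu/2*D - gu"
      using d md by (simp add: divide_less_eq field_simps)
    finally show ?thesis .
  qed
  moreover have "K + mu/2*(1-t)*D \<le> gu" using h t0 t1 by simp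
  ultimately show False by (simp add: algebra_simps diff_divide_distrib)
qed

lemma fin_sub:
  assumes "proper_fun f" "p \<in> eps_subdiff f e y"
  shows "\<bar>f y\<bar> \<noteq> \<infinity>"
proof -
  obtain w where w: "f w \<noteq> \<infinity>" using assms(1) unfolding proper_fun_def by auto
  have "f w \<ge> f y + ereal (inner p (w - y) - e)" using assms(2) unfolding eps_subdiff_def by auto
  hence "f y \<noteq> \<infinity>" using w by auto
  moreover have "f y \<noteq> -\<infinity>" using assms(1) unfolding proper_fun_def by auto
  ultimately show ?thesis by auto
qed

lemma SG:
  fixes g :: "'a::real_inner \<Rightarrow> ereal"
  assumes pg: "proper_fun g" and sc: "strongly_convex_fun mu g" and mu: "mu > 0"
    and q: "q \<in> eps_subdiff g 0 y" and gy: "g y = ereal gy"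
  shows "ereal (gy + inner q (u - y) + mu/2 * (norm (u - y))\<^sup>2) \<le> g u"
proof (cases "g u = \<infinity>")
  case True thus ?thesis by simp
next
  case False
  with pg obtain gu where gu: "g u = ereal gu" unfolding proper_fun_def
    by (cases "g u") auto
  have "gy + inner q (u - y) + mu/2 * (norm (u - y))\<^sup>2 \<le> gu"
  proof (rule lim_lemma[OF mu, where K = "gy + inner q (u - y)", simplified add.assoc[symmetric]])
    show "0 \<le> (norm (u - y))\<^sup>2" by simp
  next
    fix t :: real assume t: "0 < t" "t \<le> 1"
    define z where "z = t *\<^sub>R u + (1 - t) *\<^sub>R y"
    have "g z \<le> ereal t * g u + ereal (1 - t) * g y - ereal (mu / 2 * t * (1 - t) * (norm (u - y))\<^sup>2)"
      using sc t unfolding strongly_convex_fun_def z_def by auto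
    hence up: "g z \<le> ereal (t * gu + (1-t) * gy - mu / 2 * t * (1 - t) * (norm (u - y))\<^sup>2)"
      by (simp add: gu gy)
    have zy: "z - y = t *\<^sub>R (u - y)" unfolding z_def by (simp add: algebra_simps)
    have "g z \<ge> g y + ereal (inner q (z - y) - 0)" using q unfolding eps_subdiff_def by auto
    hence lo: "g z \<ge> ereal (gy + t * inner q (u - y))" by (simp add: gy zy)
    have "gy + t * inner q (u - y) \<le> t * gu + (1-t) * gy - mu / 2 * t * (1 - t) * (norm (u - y))\<^sup>2"
      using order_trans[OF lo up] by simp
    hence "t * (gy + inner q (u - y) + mu/2*(1-t)*(norm (u - y))\<^sup>2) \<le> t * gu"
      by (simp add: algebra_simps)
    thus "gy + inner q (u - y) + mu/2*(1-t)*(norm (u - y))\<^sup>2 \<le> gu"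
      using t by simp
  qed
  thus ?thesis by (simp add: gu)
qed

lemma QG:
  fixes f g :: "'a::real_inner \<Rightarrow> ereal"
  assumes cf: "convex_fun f" and sc: "strongly_convex_fun mu g" and mu: "mu > 0"
    and mn: "\<forall>z. f xs + g xs \<le> f z + g z"
    and fs: "f xs = ereal fs" and gs: "g xs = ereal gs"
    and fy: "f y = ereal fy" and gy: "g y = ereal gy"
  shows "fs + gs + mu/2 * (norm (y - xs))\<^sup>2 \<le> fy + gy"
proof (rule lim_lemma[OF mu, where K = "fs + gs"])
  show "0 \<le> (norm (y - xs))\<^sup>2" by simp
next
  fix t :: real assume t: "0 < t" "t \<le> 1"
  define z where "z = t *\<^sub>R y + (1 - t) *\<^sub>R xs"
  have "f z \<le> ereal t * f y + ereal (1 - t) * f xs"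
    using cf t unfolding convex_fun_def z_def by auto
  hence u1: "f z \<le> ereal (t * fy + (1-t) * fs)" by (simp add: fy fs)
  have "g z \<le> ereal t * g y + ereal (1 - t) * g xs - ereal (mu / 2 * t * (1 - t) * (norm (y - xs))\<^sup>2)"
    using sc t unfolding strongly_convex_fun_def z_def by auto
  hence u2: "g z \<le> ereal (t * gy + (1-t) * gs - mu / 2 * t * (1 - t) * (norm (y - xs))\<^sup>2)"
    by (simp add: gy gs)
  have "f z + g z \<le> ereal (t * fy + (1-t) * fs) + ereal (t * gy + (1-t) * gs - mu / 2 * t * (1 - t) * (norm (y - xs))\<^sup>2)"
    using add_mono[OF u1 u2] .
  moreover have "ereal (fs + gs) \<le> f z + g z" using mn fs gs by (metis plus_ereal.simps(1))
  ultimately have "fs + gs \<le> t * fy + (1-t) * fs + (t * gy + (1-t) * gs - mu / 2 * t * (1 - t) * (norm (y - xs))\<^sup>2)"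
    by (metis order_trans plus_ereal.simps(1) ereal_less_eq(3))
  hence "t * (fs + gs + mu/2*(1-t)*(norm (y - xs))\<^sup>2) \<le> t * (fy + gy)"
    by (simp add: algebra_simps)
  thus "fs + gs + mu/2*(1-t)*(norm (y - xs))\<^sup>2 \<le> fy + gy" using t by simp
qed

lemma partb:
  fixes y' xt v xs x y :: "'a::real_inner"
  assumes lam: "lam > 0" and mu: "mu \<ge> 0" and sg: "0 \<le> s"
    and err: "(norm (lam *\<^sub>R v + y' - xt))\<^sup>2 / (1 + lam * mu) + 2 * lam * e \<le> s\<^sup>2 * (norm (y' - xt))\<^sup>2"
    and e0: "e \<ge> 0" and R: "R \<ge> 0" and n1: "(norm (xs - y'))\<^sup>2 \<le> R" and n2: "(norm (xs - x))\<^sup>2 \<le> R"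
    and n3: "(norm (xs - y))\<^sup>2 \<le> R"
    and xt: "xt = \<alpha> *\<^sub>R x + \<beta> *\<^sub>R y" and ab: "\<alpha> \<ge> 0" "\<beta> \<ge> 0" "\<alpha> + \<beta> = 1"
  shows "(norm v)\<^sup>2 \<le> 6 * (1 + s * sqrt (1 + mu * lam))\<^sup>2 / lam\<^sup>2 * R
      \<and> e \<le> 3 * s\<^sup>2 / lam * R"
proof -
  define r where "r = lam *\<^sub>R v + y' - xt"
  define sv where "sv = y' - xt"
  have m1: "norm (xs - y') \<le> sqrt R" using n1 by (simp add: real_le_rsqrt)
  have m2: "norm (xs - x) \<le> sqrt R" using n2 by (simp add: real_le_rsqrt)
  have m3: "norm (xs - y) \<le> sqrt R" using n3 by (simp add: real_le_rsqrt)
  have "xs - xt = \<alpha> *\<^sub>R (xs - x) + \<beta> *\<^sub>R (xs - y)"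
  proof -
    have "xs = \<alpha> *\<^sub>R xs + \<beta> *\<^sub>R xs" using ab(3) by (metis scaleR_add_left scaleR_one)
    thus ?thesis unfolding xt by (simp add: algebra_simps)
  qed
  hence "norm (xs - xt) \<le> \<alpha> * norm (xs - x) + \<beta> * norm (xs - y)"
    using ab by (metis norm_triangle_ineq norm_scaleR abs_of_nonneg)
  also have "\<dots> \<le> \<alpha> * sqrt R + \<beta> * sqrt R"
    using ab m2 m3 by (intro add_mono mult_left_mono) auto
  also have "\<dots> = sqrt R" using ab(3) by (simp add: distrib_right[symmetric])
  finally have m4: "norm (xs - xt) \<le> sqrt R" .
  have "norm sv \<le> norm (y' - xs) + norm (xs - xt)" unfolding sv_def
    by (metis diff_add_cancel norm_triangle_ineq add_diff_eq)
  hence ns: "norm sv \<le> 2 * sqrt R" using m1 m4 by (simp add: norm_minus_commute)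
  have ns2: "(norm sv)\<^sup>2 \<le> 4 * R"
  proof -
    have "(norm sv)\<^sup>2 \<le> (2 * sqrt R)\<^sup>2" using ns by (intro power_mono) auto
    thus ?thesis using R by (simp add: power_mult_distrib)
  qed
  have pos: "1 + lam * mu > 0" using lam mu by (simp add: add_pos_nonneg)
  have r1: "(norm r)\<^sup>2 / (1 + lam * mu) \<ge> 0" using pos by simp
  have e1: "2 * lam * e \<le> s\<^sup>2 * (norm sv)\<^sup>2" using err r1 unfolding r_def sv_def by linarith
  have e2: "s\<^sup>2 * (norm sv)\<^sup>2 \<le> s\<^sup>2 * (4 * R)" using ns2 by (simp add: mult_left_mono)
  have eb: "e \<le> 3 * s\<^sup>2 / lam * R"
  proof -
    have "e \<le> 2 * s\<^sup>2 * R / lam" using e1 e2 lam by (simp add: field_simps)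
    also have "\<dots> \<le> 3 * s\<^sup>2 * R / lam" using R lam by (simp add: divide_right_mono mult_right_mono)
    finally show ?thesis by simp
  qed
  have "(norm r)\<^sup>2 \<le> (1 + lam * mu) * (s\<^sup>2 * (norm sv)\<^sup>2)"
  proof -
    have "(norm r)\<^sup>2 / (1 + lam * mu) \<le> s\<^sup>2 * (norm sv)\<^sup>2"
      using err lam e0 unfolding r_def sv_def
      by (smt (verit) mult_nonneg_nonneg)
    thus ?thesis using pos by (simp add: divide_le_eq mult.commute)
  qed
  hence "norm r \<le> sqrt ((1 + lam * mu) * (s\<^sup>2 * (norm sv)\<^sup>2))" by (rule real_le_rsqrt)
  also have "\<dots> = sqrt (1 + lam * mu) * (s * norm sv)"
    using sg by (simp add: real_sqrt_mult power_mult_distrib[symmetric])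
  finally have "norm r \<le> sqrt (1 + lam * mu) * (s * norm sv)" .
  hence nr: "norm r \<le> s * sqrt (1 + mu * lam) * norm sv" by (simp add: mult.commute mult.left_commute)
  have lv: "lam *\<^sub>R v = r - sv" unfolding r_def sv_def by simp
  have "lam * norm v = norm (r - sv)" using lv lam by (metis norm_scaleR abs_of_pos)
  also have "\<dots> \<le> norm r + norm sv" by (rule norm_triangle_ineq4)
  also have "\<dots> \<le> (1 + s * sqrt (1 + mu * lam)) * norm sv" using nr by (simp add: algebra_simps)
  also have "\<dots> \<le> (1 + s * sqrt (1 + mu * lam)) * (2 * sqrt R)"
    using ns sg mu lam by (intro mult_left_mono) (auto intro!: add_nonneg_nonneg mult_nonneg_nonneg)
  finally have lnv: "lam * norm v \<le> (1 + s * sqrt (1 + mu * lam)) * (2 * sqrt R)" .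
  have "(lam * norm v)\<^sup>2 \<le> ((1 + s * sqrt (1 + mu * lam)) * (2 * sqrt R))\<^sup>2"
    using lnv lam by (intro power_mono) auto
  also have "\<dots> = 4 * (1 + s * sqrt (1 + mu * lam))\<^sup>2 * R" using R by (simp add: power_mult_distrib)
  finally have "lam\<^sup>2 * (norm v)\<^sup>2 \<le> 4 * (1 + s * sqrt (1 + mu * lam))\<^sup>2 * R"
    by (simp add: power_mult_distrib)
  hence "(norm v)\<^sup>2 \<le> 4 * (1 + s * sqrt (1 + mu * lam))\<^sup>2 / lam\<^sup>2 * R"
    using lam by (simp add: field_simps)
  also have "\<dots> \<le> 6 * (1 + s * sqrt (1 + mu * lam))\<^sup>2 / lam\<^sup>2 * R"
    using R lam by (intro mult_right_mono divide_right_mono) auto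
  finally show ?thesis using eb by simp
qed

lemma afacts:
  assumes A: "A \<ge> 0" and lam: "lam > 0" and mu: "mu > 0"
    and a: "a = ((1 + 2 * mu * A) * lam + sqrt (((1 + 2 * mu * A) * lam)\<^sup>2 + 4 * (1 + mu * A) * A * lam)) / 2"
  shows "a > 0 \<and> a\<^sup>2 = lam * ((1 + 2*mu*A) * a + (1 + mu*A) * A) \<and> mu * A * lam \<le> a"
proof -
  define B where "B = (1 + 2 * mu * A) * lam"
  define C where "C = 4 * (1 + mu * A) * A * lam"
  have B: "B > 0" unfolding B_def using A lam mu by (simp add: add_pos_nonneg)
  have C: "C \<ge> 0" unfolding C_def using A lam mu by simp
  have sq: "sqrt (B\<^sup>2 + C) \<ge> B"
    using B C by (metis abs_of_pos le_add_same_cancel1 real_sqrt_abs real_sqrt_le_mono)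
  have a2: "2 * a - B = sqrt (B\<^sup>2 + C)" unfolding a B_def[symmetric] C_def[symmetric] by (simp add: field_simps)
  have "(2 * a - B)\<^sup>2 = B\<^sup>2 + C" unfolding a2 using B C by simp
  hence q: "a\<^sup>2 = a * B + C / 4" by (simp add: algebra_simps power2_eq_square)
  have age: "a \<ge> B" using a2 sq by simp
  have "a > 0" using age B by simp
  moreover have "a\<^sup>2 = lam * ((1 + 2*mu*A) * a + (1 + mu*A) * A)"
    using q unfolding B_def C_def by (simp add: algebra_simps)
  moreover have "mu * A * lam \<le> B" unfolding B_def using A lam mu by (simp add: algebra_simps)
  ultimately show ?thesis using age by simp
qed

theorem theorem2p6:
  fixes f g :: "'a::euclidean_space \<Rightarrow> ereal"
    and \<mu> \<sigma> :: real
    and xstar :: 'a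
    and x y v xt :: "nat \<Rightarrow> 'a"
    and lam a A eps :: "nat \<Rightarrow> real"
  assumes f: "proper_fun f" "closed_fun f" "convex_fun f"
    and g: "proper_fun g" "closed_fun g" "convex_fun g"
    and mu_pos: "\<mu> > 0"
    and g_sc: "strongly_convex_fun \<mu> g"
    and dom_h: "\<exists>z. f z + g z \<noteq> \<infinity>"
    and xstar_min: "\<forall>z. f xstar + g xstar \<le> f z + g z"
    and sigma: "0 \<le> \<sigma>" "\<sigma> \<le> 1"
    and A0: "A 0 = 0"
    and lam_pos: "\<And>k. lam (Suc k) > 0"
    and a_def: "\<And>k. a (Suc k) =
        ((1 + 2 * \<mu> * A k) * lam (Suc k)
          + sqrt (((1 + 2 * \<mu> * A k) * lam (Suc k))\<^sup>2 + 4 * (1 + \<mu> * A k) * A k * lam (Suc k))) / 2"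
    and xt_def: "\<And>k. xt k =
        ((a (Suc k) - \<mu> * A k * lam (Suc k)) / (A k + a (Suc k))) *\<^sub>R x k
        + ((A k + \<mu> * A k * lam (Suc k)) / (A k + a (Suc k))) *\<^sub>R y k"
    and eps_nonneg: "\<And>k. eps (Suc k) \<ge> 0"
    and v_incl: "\<And>k. v (Suc k) \<in>
        {p + q | p q. p \<in> eps_subdiff f (eps (Suc k)) (y (Suc k)) \<and> q \<in> eps_subdiff g 0 (y (Suc k))}"
    and err: "\<And>k. (norm (lam (Suc k) *\<^sub>R v (Suc k) + y (Suc k) - xt k))\<^sup>2 / (1 + lam (Suc k) * \<mu>)
        + 2 * lam (Suc k) * eps (Suc k) \<le> \<sigma>\<^sup>2 * (norm (y (Suc k) - xt k))\<^sup>2"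
    and A_Suc: "\<And>k. A (Suc k) = A k + a (Suc k)"
    and x_Suc: "\<And>k. x (Suc k) =
        ((1 + \<mu> * A k) / (1 + \<mu> * A (Suc k))) *\<^sub>R x k
        + (\<mu> * a (Suc k) / (1 + \<mu> * A (Suc k))) *\<^sub>R y (Suc k)
        - (a (Suc k) / (1 + \<mu> * A (Suc k))) *\<^sub>R v (Suc k)"
  shows
    "(\<forall>k\<ge>1.
        f (y k) + g (y k) - (f xstar + g xstar) \<le> ereal ((norm (xstar - x 0))\<^sup>2 / (2 * A k))
      \<and> (norm (xstar - y k))\<^sup>2 \<le> (norm (xstar - x 0))\<^sup>2 / (\<mu> * A k)
      \<and> (norm (xstar - x k))\<^sup>2 \<le> (norm (xstar - x 0))\<^sup>2 / (1 + \<mu> * A k))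
   \<and> (\<forall>k\<ge>1.
        v (Suc k) \<in> {p + q | p q. p \<in> eps_subdiff f (eps (Suc k)) (y (Suc k)) \<and> q \<in> eps_subdiff g 0 (y (Suc k))}
      \<and> (norm (v (Suc k)))\<^sup>2 \<le> 6 * (1 + \<sigma> * sqrt (1 + \<mu> * lam (Suc k)))\<^sup>2 / (lam (Suc k))\<^sup>2
            * ((norm (xstar - x 0))\<^sup>2 / (\<mu> * A k))
      \<and> eps (Suc k) \<le> 3 * \<sigma>\<^sup>2 / lam (Suc k) * ((norm (xstar - x 0))\<^sup>2 / (\<mu> * A k)))"
proof -
  define d0 where "d0 = norm (xstar - x 0)"
  have "\<forall>k. \<exists>pq. fst pq \<in> eps_subdiff f (eps (Suc k)) (y (Suc k)) \<and> snd pq \<in> eps_subdiff g 0 (y (Suc k))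
          \<and> v (Suc k) = fst pq + snd pq"
  proof
    fix k
    from v_incl[of k] obtain p q where "p \<in> eps_subdiff f (eps (Suc k)) (y (Suc k))"
      "q \<in> eps_subdiff g 0 (y (Suc k))" "v (Suc k) = p + q" by blast
    thus "\<exists>pq. fst pq \<in> eps_subdiff f (eps (Suc k)) (y (Suc k)) \<and> snd pq \<in> eps_subdiff g 0 (y (Suc k))
          \<and> v (Suc k) = fst pq + snd pq" by (intro exI[of _ "(p, q)"]) simp
  qed
  then obtain PQ where PQ: "\<And>k. fst (PQ k) \<in> eps_subdiff f (eps (Suc k)) (y (Suc k))"
      "\<And>k. snd (PQ k) \<in> eps_subdiff g 0 (y (Suc k))" "\<And>k. v (Suc k) = fst (PQ k) + snd (PQ k)"
    by metis
  define FR where "FR u = real_of_ereal (f u)" for u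
  define GR where "GR u = real_of_ereal (g u)" for u
  have fyk: "f (y (Suc k)) = ereal (FR (y (Suc k)))" for k
    using fin_sub[OF f(1) PQ(1)[of k]] unfolding FR_def by (cases "f (y (Suc k))") auto
  have gyk: "g (y (Suc k)) = ereal (GR (y (Suc k)))" for k
    using fin_sub[OF g(1) PQ(2)[of k]] unfolding GR_def by (cases "g (y (Suc k))") auto
  have fxs: "f xstar = ereal (FR xstar)" and gxs: "g xstar = ereal (GR xstar)"
  proof -
    obtain z0 where z0: "f z0 + g z0 \<noteq> \<infinity>" using dom_h by blast
    have le: "f xstar + g xstar \<le> f z0 + g z0" using xstar_min by blast
    have nf: "f xstar \<noteq> -\<infinity>" "g xstar \<noteq> -\<infinity>" using f(1) g(1) unfolding proper_fun_def by auto
    have "f xstar + g xstar \<noteq> \<infinity>" using le z0 by (metis ereal_infty_less_eq(1))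
    hence "f xstar \<noteq> \<infinity> \<and> g xstar \<noteq> \<infinity>" using nf by auto
    thus "f xstar = ereal (FR xstar)" "g xstar = ereal (GR xstar)"
      using nf unfolding FR_def GR_def by (cases "f xstar"; cases "g xstar"; auto)+
  qed
  define hr where "hr k = FR (y k) + GR (y k)" for k
  define hs where "hs = FR xstar + GR xstar"
  define Gk where "Gk k u = inner (v (Suc k)) (u - y (Suc k)) - eps (Suc k) + \<mu> / 2 * (norm (u - y (Suc k)))\<^sup>2" for k u
  have Gam: "ereal (hr (Suc k) + Gk k u) \<le> f u + g u" for k u
  proof -
    have a1: "f u \<ge> f (y (Suc k)) + ereal (inner (fst (PQ k)) (u - y (Suc k)) - eps (Suc k))"
      using PQ(1)[of k] unfolding eps_subdiff_def by auto
    hence a1': "ereal (FR (y (Suc k)) + inner (fst (PQ k)) (u - y (Suc k)) - eps (Suc k)) \<le> f u"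
      by (simp add: fyk algebra_simps)
    have a2: "ereal (GR (y (Suc k)) + inner (snd (PQ k)) (u - y (Suc k)) + \<mu>/2 * (norm (u - y (Suc k)))\<^sup>2) \<le> g u"
      by (rule SG[OF g(1) g_sc mu_pos PQ(2) gyk])
    have "ereal (FR (y (Suc k)) + inner (fst (PQ k)) (u - y (Suc k)) - eps (Suc k))
        + ereal (GR (y (Suc k)) + inner (snd (PQ k)) (u - y (Suc k)) + \<mu>/2 * (norm (u - y (Suc k)))\<^sup>2) \<le> f u + g u"
      by (rule add_mono[OF a1' a2])
    moreover have "hr (Suc k) + Gk k u = (FR (y (Suc k)) + inner (fst (PQ k)) (u - y (Suc k)) - eps (Suc k))
        + (GR (y (Suc k)) + inner (snd (PQ k)) (u - y (Suc k)) + \<mu>/2 * (norm (u - y (Suc k)))\<^sup>2)"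
      unfolding hr_def Gk_def PQ(3) by (simp add: inner_add_left algebra_simps)
    ultimately show ?thesis by simp
  qed
  have GamS: "hr (Suc k) + Gk k xstar \<le> hs" for k
    using Gam[of k xstar] unfolding hs_def by (simp add: fxs gxs)
  have GamY: "hr (Suc k) + Gk k (y (Suc j)) \<le> hr (Suc j)" for k j
    using Gam[of k "y (Suc j)"] unfolding hr_def by (simp add: fyk gyk)
  have Anonneg: "A k \<ge> 0" for k
  proof (induction k)
    case 0 thus ?case using A0 by simp
  next
    case (Suc k)
    have "a (Suc k) > 0" using afacts[OF Suc lam_pos mu_pos a_def] by simp
    thus ?case using Suc A_Suc[of k] by simp
  qed
  have af: "a (Suc k) > 0 \<and> (a (Suc k))\<^sup>2 = lam (Suc k) * ((1 + 2*\<mu>*A k) * a (Suc k) + (1 + \<mu>*A k) * A k)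
      \<and> \<mu> * A k * lam (Suc k) \<le> a (Suc k)" for k
    by (rule afacts[OF Anonneg lam_pos mu_pos a_def])
  have Apos: "A k > 0" if "k \<ge> 1" for k
  proof -
    obtain j where "k = Suc j" using \<open>k \<ge> 1\<close> by (cases k) auto
    thus ?thesis using af[of j] Anonneg[of j] A_Suc[of j] by simp
  qed
  have Pot: "A k * (hr k - hs) + (1 + \<mu> * A k) / 2 * (norm (xstar - x k))\<^sup>2 \<le> d0\<^sup>2 / 2" for k
  proof (induction k)
    case 0 thus ?case using A0 unfolding d0_def by simp
  next
    case (Suc k)
    have hY: "A k * (hr (Suc k) + Gk k (y k)) \<le> A k * hr k"
    proof (cases k)
      case 0 thus ?thesis using A0 by simp
    next
      case (Suc j)
      thus ?thesis using GamY[of k j] Anonneg[of k] by (simp add: mult_left_mono)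
    qed
    have st: "(A k + a (Suc k)) * (hr (Suc k) - hs) + (1 + \<mu>*(A k + a (Suc k))) / 2 * (norm (xstar - x (Suc k)))\<^sup>2
      \<le> A k * (hr k - hs) + (1 + \<mu>*A k) / 2 * (norm (xstar - x k))\<^sup>2"
    proof (rule step[OF mu_pos lam_pos[of k] Anonneg[of k] _ _ _ sigma err[of k] xt_def[of k]])
      show "0 < a (Suc k)" using af[of k] by simp
      show "(a (Suc k))\<^sup>2 = lam (Suc k) * ((1 + 2*\<mu>*A k) * a (Suc k) + (1 + \<mu>*A k) * A k)" using af[of k] by simp
      show "\<mu> * A k * lam (Suc k) \<le> a (Suc k)" using af[of k] by simp
      show "x (Suc k) = ((1 + \<mu> * A k) / (1 + \<mu> * (A k + a (Suc k)))) *\<^sub>R x k +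
          (\<mu> * a (Suc k) / (1 + \<mu> * (A k + a (Suc k)))) *\<^sub>R y (Suc k) -
          (a (Suc k) / (1 + \<mu> * (A k + a (Suc k)))) *\<^sub>R v (Suc k)"
        using x_Suc[of k] unfolding A_Suc[of k] .
      show "A k * (hr (Suc k) + (inner (v (Suc k)) (y k - y (Suc k)) - eps (Suc k) + \<mu> / 2 * (norm (y k - y (Suc k)))\<^sup>2))
          \<le> A k * hr k" using hY unfolding Gk_def .
      show "hr (Suc k) + (inner (v (Suc k)) (xstar - y (Suc k)) - eps (Suc k) + \<mu> / 2 * (norm (xstar - y (Suc k)))\<^sup>2) \<le> hs"
        using GamS[of k] unfolding Gk_def .
    qed
    thus ?case using Suc.IH unfolding A_Suc[of k] by linarith
  qed
  have hyk: "f (y k) + g (y k) = ereal (hr k)" if "k \<ge> 1" for k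
  proof -
    obtain j where "k = Suc j" using \<open>k \<ge> 1\<close> by (cases k) auto
    thus ?thesis unfolding hr_def using fyk[of j] gyk[of j] by simp
  qed
  have QGk: "hs + \<mu>/2 * (norm (y k - xstar))\<^sup>2 \<le> hr k" if "k \<ge> 1" for k
  proof -
    obtain j where j: "k = Suc j" using \<open>k \<ge> 1\<close> by (cases k) auto
    show ?thesis unfolding hs_def hr_def j
      by (rule QG[OF f(3) g_sc mu_pos xstar_min fxs gxs fyk gyk])
  qed
  have partA: "hr k - hs \<le> d0\<^sup>2 / (2 * A k) \<and> (norm (xstar - y k))\<^sup>2 \<le> d0\<^sup>2 / (\<mu> * A k)
      \<and> (norm (xstar - x k))\<^sup>2 \<le> d0\<^sup>2 / (1 + \<mu> * A k)" if k1: "k \<ge> 1" for k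
  proof -
    have Ak: "A k > 0" using Apos[OF k1] .
    have P: "A k * (hr k - hs) + (1 + \<mu> * A k) / 2 * (norm (xstar - x k))\<^sup>2 \<le> d0\<^sup>2 / 2" by (rule Pot)
    have Q: "hs + \<mu>/2 * (norm (xstar - y k))\<^sup>2 \<le> hr k" using QGk[OF k1] by (simp add: norm_minus_commute)
    have c0: "(1 + \<mu> * A k) / 2 * (norm (xstar - x k))\<^sup>2 \<ge> 0" using Ak mu_pos by simp
    have q0: "\<mu>/2 * (norm (xstar - y k))\<^sup>2 \<ge> 0" using mu_pos by simp
    have h1: "A k * (hr k - hs) \<le> d0\<^sup>2 / 2" using P c0 by linarith
    hence i1: "hr k - hs \<le> d0\<^sup>2 / (2 * A k)" using Ak by (simp add: field_simps)
    have "A k * (\<mu>/2 * (norm (xstar - y k))\<^sup>2) \<le> A k * (hr k - hs)"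
      using Q Ak by (intro mult_left_mono) auto
    hence "A k * (\<mu>/2 * (norm (xstar - y k))\<^sup>2) \<le> d0\<^sup>2 / 2" using h1 by linarith
    hence i2: "(norm (xstar - y k))\<^sup>2 \<le> d0\<^sup>2 / (\<mu> * A k)" using Ak mu_pos by (simp add: field_simps)
    have "A k * (hr k - hs) \<ge> 0" using Q q0 Ak by simp
    hence "(1 + \<mu> * A k) / 2 * (norm (xstar - x k))\<^sup>2 \<le> d0\<^sup>2 / 2" using P by linarith
    moreover have "1 + \<mu> * A k > 0" using Ak mu_pos by (simp add: add_pos_pos)
    ultimately have i3: "(norm (xstar - x k))\<^sup>2 \<le> d0\<^sup>2 / (1 + \<mu> * A k)" by (simp add: field_simps)
    show ?thesis using i1 i2 i3 by simp
  qed
  show ?thesis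
  proof (intro conjI allI impI)
    fix k :: nat assume k1: "k \<ge> 1"
    have "f (y k) + g (y k) - (f xstar + g xstar) = ereal (hr k - hs)"
      unfolding hyk[OF k1] hs_def by (simp add: fxs gxs)
    thus "f (y k) + g (y k) - (f xstar + g xstar) \<le> ereal ((norm (xstar - x 0))\<^sup>2 / (2 * A k))"
      using partA[OF k1] unfolding d0_def by simp
    show "(norm (xstar - y k))\<^sup>2 \<le> (norm (xstar - x 0))\<^sup>2 / (\<mu> * A k)"
      using partA[OF k1] unfolding d0_def by simp
    show "(norm (xstar - x k))\<^sup>2 \<le> (norm (xstar - x 0))\<^sup>2 / (1 + \<mu> * A k)"
      using partA[OF k1] unfolding d0_def by simp
  next
    fix k :: nat assume k1: "k \<ge> 1"
    show "v (Suc k) \<in> {p + q | p q. p \<in> eps_subdiff f (eps (Suc k)) (y (Suc k)) \<and> q \<in> eps_subdiff g 0 (y (Suc k))}"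
      by (rule v_incl)
    have Ak: "A k > 0" using Apos[OF k1] .
    define R where "R = d0\<^sup>2 / (\<mu> * A k)"
    have R0: "R \<ge> 0" unfolding R_def using Ak mu_pos by simp
    have AS: "A (Suc k) \<ge> A k" using A_Suc[of k] af[of k] by simp
    have n1: "(norm (xstar - y (Suc k)))\<^sup>2 \<le> R"
    proof -
      have "(norm (xstar - y (Suc k)))\<^sup>2 \<le> d0\<^sup>2 / (\<mu> * A (Suc k))" using partA[of "Suc k"] by simp
      also have "\<dots> \<le> R" unfolding R_def using Ak AS mu_pos
        by (intro divide_left_mono) (auto intro!: mult_left_mono mult_pos_pos)
      finally show ?thesis .
    qed
    have n2: "(norm (xstar - x k))\<^sup>2 \<le> R"
    proof -
      have "(norm (xstar - x k))\<^sup>2 \<le> d0\<^sup>2 / (1 + \<mu> * A k)" using partA[OF k1] by simp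
      also have "\<dots> \<le> R" unfolding R_def using Ak mu_pos
        by (intro divide_left_mono) (auto intro!: mult_pos_pos add_pos_pos)
      finally show ?thesis .
    qed
    have n3: "(norm (xstar - y k))\<^sup>2 \<le> R" using partA[OF k1] unfolding R_def by simp
    have ABp: "A k + a (Suc k) > 0" using Ak af[of k] by simp
    have al: "(a (Suc k) - \<mu> * A k * lam (Suc k)) / (A k + a (Suc k)) \<ge> 0" using af[of k] ABp by simp
    have be: "(A k + \<mu> * A k * lam (Suc k)) / (A k + a (Suc k)) \<ge> 0" using Ak mu_pos lam_pos[of k] ABp by simp
    have ab1: "(a (Suc k) - \<mu> * A k * lam (Suc k)) / (A k + a (Suc k)) + (A k + \<mu> * A k * lam (Suc k)) / (A k + a (Suc k)) = 1"
      using ABp by (simp add: add_divide_distrib[symmetric])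
    have pb: "(norm (v (Suc k)))\<^sup>2 \<le> 6 * (1 + \<sigma> * sqrt (1 + \<mu> * lam (Suc k)))\<^sup>2 / (lam (Suc k))\<^sup>2 * R
      \<and> eps (Suc k) \<le> 3 * \<sigma>\<^sup>2 / lam (Suc k) * R"
      by (rule partb[OF lam_pos[of k] _ sigma(1) err[of k] eps_nonneg[of k] R0 n1 n2 n3 xt_def[of k] al be ab1])
        (use mu_pos in simp)
    show "(norm (v (Suc k)))\<^sup>2 \<le> 6 * (1 + \<sigma> * sqrt (1 + \<mu> * lam (Suc k)))\<^sup>2 / (lam (Suc k))\<^sup>2
            * ((norm (xstar - x 0))\<^sup>2 / (\<mu> * A k))"
      using pb unfolding R_def d0_def by simp
    show "eps (Suc k) \<le> 3 * \<sigma>\<^sup>2 / lam (Suc k) * ((norm (xstar - x 0))\<^sup>2 / (\<mu> * A k))"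
      using pb unfolding R_def d0_def by simp
  qed
qed

end
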